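(* In the setting of the context, for $1\le i\le 2n$ let $A_1(i,c)$ be the area of the polygon with vertices $P_i,P_{i+1},\dots,P_{i+n}$ and let $L_V(i,c)=\sum_{j=i}^{i+n-1}\lambda_{j+\frac12}$ be the $V$-length of the polygonal arc $P_i,P_{i+1},\dots,P_{i+n}$. Then $A_1(i,c)-c\,L_V(i,c)$ is independent of $i$.
   Context: $[x,y]$ denotes the determinant of the matrix with columns $x,y\in\mathbb{R}^2$. Fix $n\ge2$; indices (integer and half-integer) are read modulo $2n$. $U$ is a convex $2n$-gon with distinct vertices $U_1,\dots,U_{2n}$ in counterclockwise order with $U_{i+n}=-U_i$, and $V_{i+\frac12}=(U_{i+1}-U_i)/[U_i,U_{i+1}]$. Let $c>0$ and let $P$ be a convex polygon with nonempty interior and vertex list $P_1,\dots,P_{2n}$ (listed counterclockwise, consecutive entries may coincide) with $P_{i+1}-P_i=\lambda_{i+\frac12}V_{i+\frac12}$, $\lambda_{i+\frac12}\ge0$, and $P_i-P_{i+n}=2cU_i$ for all $i$. *)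

theory Defs
  imports "HOL-Analysis.Analysis"
begin

definition det2 :: "real \<times> real \<Rightarrow> real \<times> real \<Rightarrow> real" where
  "det2 x y = fst x * snd y - snd x * fst y"

text \<open>Vertices indexed by nat, read modulo 2n via periodicity.
  Vhalf U i stands for V_{i+1/2}.\<close>
definition Vhalf :: "(nat \<Rightarrow> real \<times> real) \<Rightarrow> nat \<Rightarrow> real \<times> real" where
  "Vhalf U i = (1 / det2 (U i) (U (Suc i))) *\<^sub>R (U (Suc i) - U i)"

definition strictly_convex_ccw :: "nat \<Rightarrow> (nat \<Rightarrow> real \<times> real) \<Rightarrow> bool" where
  "strictly_convex_ccw m U \<longleftrightarrow> inj_on U {1..m} \<and>
     (\<forall>i\<in>{1..m}. \<forall>j\<in>{1..m}. j \<noteq> i \<and> j \<noteq> (i mod m) + 1 \<longrightarrow>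
        det2 (U (Suc i) - U i) (U j - U i) > 0)"

text \<open>Weakly convex, counterclockwise vertex list (consecutive entries may coincide).\<close>
definition convex_ccw :: "nat \<Rightarrow> (nat \<Rightarrow> real \<times> real) \<Rightarrow> bool" where
  "convex_ccw m P \<longleftrightarrow>
     (\<forall>i\<in>{1..m}. \<forall>j\<in>{1..m}. det2 (P (Suc i) - P i) (P j - P i) \<ge> 0)"

text \<open>A_1(i,c): area of the polygon with vertices P_i,...,P_{i+n} (a convex polygon,
  hence equal to the convex hull of these points).\<close>
definition arc_area :: "nat \<Rightarrow> (nat \<Rightarrow> real \<times> real) \<Rightarrow> nat \<Rightarrow> real" where
  "arc_area n P i = measure lebesgue (convex hull (P ` {i..i+n}))"

definition V_length :: "nat \<Rightarrow> (nat \<Rightarrow> real) \<Rightarrow> nat \<Rightarrow> real" where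
  "V_length n lam i = (\<Sum>j=i..i+n-1. lam j)"

end

theory Submission
  imports Defs
begin
definition phi :: "real^2 \<Rightarrow> real \<times> real" where "phi x = (x$1, x$2)"
definition psi :: "real \<times> real \<Rightarrow> real^2" where "psi p = (\<chi> i. if i = 1 then fst p else snd p)"
lemma phi_psi[simp]: "phi (psi p) = p" by (simp add: phi_def psi_def)
lemma psi_phi[simp]: "psi (phi x) = x"
  unfolding phi_def psi_def by (simp add: vec_eq_iff) (metis exhaust_2)
lemma linear_psi: "linear psi"
  by (rule linearI) (auto simp: psi_def vec_eq_iff)
lemma phi_meas[measurable]: "phi \<in> borel_measurable borel"
  unfolding phi_def by measurable
lemma Basis2: "(Basis :: (real^2) set) = {axis 1 1, axis 2 1}"
  by (auto simp: Basis_vec_def) (metis exhaust_2)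
lemma axis12: "axis 1 (1::real) \<noteq> (axis 2 1 :: real^2)"
  by (simp add: axis_eq_axis)
lemma BasisP: "(Basis :: (real\<times>real) set) = {(1,0),(0,1)}"
  by (auto simp: Basis_prod_def)
lemma vimage_box: "phi -` box l u = box (psi l) (psi u)"
  by (cases l; cases u) (auto simp: mem_box Basis2 BasisP phi_def psi_def inner_axis inner_Pair)
lemma lborel_phi: "(lborel :: (real\<times>real) measure) = distr lborel borel phi"
proof (rule lborel_eqI)
  fix l u :: "real \<times> real"
  assume a: "\<And>b. b \<in> Basis \<Longrightarrow> l \<bullet> b \<le> u \<bullet> b"
  have "fst l \<le> fst u" "snd l \<le> snd u" using a[of "(1,0)"] a[of "(0,1)"]
    by (cases l; cases u; simp add: BasisP inner_Pair)+
  then show "emeasure (distr lborel borel phi) (box l u) = (\<Prod>b\<in>Basis. (u - l) \<bullet> b)"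
    apply (subst emeasure_distr) apply simp apply simp
    by (cases l; cases u) (auto simp: vimage_box emeasure_lborel_box_eq Basis2 BasisP axis12 inner_axis psi_def inner_Pair)
qed simp
lemma measure_phi: assumes "S \<in> sets borel" shows "measure lborel S = measure lborel (psi ` S)"
proof -
  have "measure lborel S = measure (distr lborel borel phi) S" using lborel_phi by simp
  also have "\<dots> = measure lborel (phi -` S)" using assms by (simp add: measure_distr)
  also have "phi -` S = psi ` S"
  proof (intro set_eqI iffI)
    fix x assume "x \<in> phi -` S" then show "x \<in> psi ` S" by (metis psi_phi image_eqI vimageE)
  next
    fix x assume "x \<in> psi ` S" then show "x \<in> phi -` S" by auto
  qed
  finally show ?thesis .
qed
lemma tri_area: "measure lebesgue (convex hull {A, B, C}) = \<bar>det2 (B - A) (C - A)\<bar> / 2"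
proof -
  have cpt: "compact (convex hull {A, B, C})" by (intro finite_imp_compact_convex_hull) auto
  hence "measure lebesgue (convex hull {A, B, C}) = measure lborel (convex hull {A, B, C})"
    by (intro measure_completion) (auto dest: compact_imp_closed)
  also have "\<dots> = measure lborel (psi ` (convex hull {A, B, C}))"
    using cpt by (intro measure_phi) (auto dest: compact_imp_closed)
  also have "psi ` (convex hull {A, B, C}) = convex hull {psi A, psi B, psi C}"
    by (simp add: convex_hull_linear_image[OF linear_psi])
  also have "measure lborel \<dots> = \<bar>det2 (B - A) (C - A)\<bar> / 2"
    using content_triangle[of "psi A" "psi B" "psi C"] by (simp add: psi_def det2_def abs_minus_commute algebra_simps)
  finally show ?thesis .
qed
lemma det2_add_left[simp]: "det2 (a + b) c = det2 a c + det2 b c" by (simp add: det2_def algebra_simps)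
lemma det2_add_right[simp]: "det2 c (a + b) = det2 c a + det2 c b" by (simp add: det2_def algebra_simps)
lemma det2_diff_left: "det2 (a - b) c = det2 a c - det2 b c" by (simp add: det2_def algebra_simps)
lemma det2_diff_right: "det2 c (a - b) = det2 c a - det2 c b" by (simp add: det2_def algebra_simps)
lemma det2_scale_left[simp]: "det2 (r *\<^sub>R a) c = r * det2 a c" by (simp add: det2_def algebra_simps)
lemma det2_scale_right[simp]: "det2 c (r *\<^sub>R a) = r * det2 c a" by (simp add: det2_def algebra_simps)
lemma det2_neg_left[simp]: "det2 (- a) c = - det2 a c" by (simp add: det2_def algebra_simps)
lemma det2_neg_right[simp]: "det2 c (- a) = - det2 c a" by (simp add: det2_def algebra_simps)
lemma det2_self[simp]: "det2 a a = 0" by (simp add: det2_def algebra_simps)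
lemma det2_zero[simp]: "det2 0 a = 0" "det2 a 0 = 0" by (simp_all add: det2_def)
lemma det2_swap: "det2 a b = - det2 b a" by (simp add: det2_def algebra_simps)
lemma pluecker: "det2 w a * det2 b y - det2 w b * det2 a y + det2 w y * det2 a b = 0"
  by (simp add: det2_def algebra_simps)

lemma halfplane_convex: "convex {x. det2 v (x - p) \<ge> (0::real)}"
  unfolding convex_def
proof (intro allI ballI impI)
  fix x y and u w :: real
  assume x: "x \<in> {x. det2 v (x - p) \<ge> 0}" and y: "y \<in> {x. det2 v (x - p) \<ge> 0}"
     and u: "0 \<le> u" "0 \<le> w" "u + w = 1"
  have "det2 v (u *\<^sub>R x + w *\<^sub>R y - p) = u * det2 v (x - p) + w * det2 v (y - p)"
  proof -
    have w: "w = 1 - u" using u(3) by simp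
    show ?thesis unfolding det2_def w by (simp add: algebra_simps)
  qed
  then show "u *\<^sub>R x + w *\<^sub>R y \<in> {x. det2 v (x - p) \<ge> 0}"
    using x y u by simp
qed

lemma hull_halfplane:
  assumes "\<forall>x\<in>S. det2 v (x - p) \<ge> 0" "y \<in> convex hull S"
  shows "det2 v (y - p) \<ge> 0"
proof -
  have "convex hull S \<subseteq> {x. det2 v (x - p) \<ge> 0}"
    using assms(1) by (intro hull_minimal halfplane_convex) auto
  then show ?thesis using assms(2) by auto
qed
lemma collinear_det2:
  assumes "det2 d w = 0" "d \<noteq> 0"
  shows "w = ((d \<bullet> w) / (d \<bullet> d)) *\<^sub>R d"
proof -
  obtain d1 d2 where d: "d = (d1, d2)" by (cases d)
  obtain w1 w2 where w: "w = (w1, w2)" by (cases w)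
  have rel: "d1 * w2 = d2 * w1" using assms(1) by (simp add: det2_def d w)
  have nz: "d1 * d1 + d2 * d2 \<noteq> 0" using assms(2) d
    by (metis add_nonneg_eq_0_iff mult_eq_0_iff zero_le_square prod.inject zero_prod_def)
  have "w1 = (d1 * w1 + d2 * w2) / (d1 * d1 + d2 * d2) * d1"
    using nz rel by (simp add: field_simps)
  moreover have "w2 = (d1 * w1 + d2 * w2) / (d1 * d1 + d2 * d2) * d2"
    using nz rel by (simp add: field_simps)
  ultimately show ?thesis by (simp add: d w inner_Pair)
qed

lemma seg_lemma:
  assumes "q - p = \<kappa> *\<^sub>R u" "det2 u (z - p) = 0"
    "det2 v1 (z - p) \<ge> 0" "det2 v1 (q - p) > 0"
    "det2 v2 (z - q) \<ge> 0" "det2 v2 (p - q) > 0"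
  shows "z \<in> closed_segment p q"
proof -
  define d where "d = q - p"
  have dnz: "d \<noteq> 0" using assms(4) by (auto simp: d_def)
  have "det2 d (z - p) = 0" using assms(1,2) by (simp add: d_def)
  then obtain r where r: "z - p = r *\<^sub>R d" using collinear_det2[OF _ dnz] by blast
  have "det2 v1 (z - p) = r * det2 v1 (q - p)" by (simp add: r d_def del: det2_diff_right)
  with assms(3,4) have r0: "r \<ge> 0" by (simp add: zero_le_mult_iff)
  have "z - q = (z - p) - d" by (simp add: d_def)
  also have "\<dots> = (1 - r) *\<^sub>R (p - q)" by (simp add: r d_def algebra_simps)
  finally have "det2 v2 (z - q) = (1 - r) * det2 v2 (p - q)"
    by (simp del: det2_diff_right)
  with assms(5,6) have r1: "r \<le> 1" by (simp add: zero_le_mult_iff)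
  have "z = (1 - r) *\<^sub>R p + r *\<^sub>R q"
    using r by (simp add: d_def algebra_simps)
  then show ?thesis using r0 r1 by (auto simp: in_segment)
qed
lemma det2_comb: "\<alpha> + \<beta> = 1 \<Longrightarrow> det2 v (\<alpha> *\<^sub>R x + \<beta> *\<^sub>R y - p) = \<alpha> * det2 v (x - p) + \<beta> * det2 v (y - p)"
proof -
  assume "\<alpha> + \<beta> = 1"
  hence b: "\<beta> = 1 - \<alpha>" by simp
  show ?thesis unfolding det2_def b by (simp add: algebra_simps)
qed

lemma comb_lemma: "\<alpha> *\<^sub>R b + \<beta> *\<^sub>R ((1 - s) *\<^sub>R b + s *\<^sub>R a) = (\<alpha> + \<beta> * (1 - s)) *\<^sub>R b + (\<beta> * s) *\<^sub>R (a :: 'a :: real_vector)"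
  by (simp add: algebra_simps)

lemma comb_lemma2: "\<alpha> *\<^sub>R a + \<beta> *\<^sub>R ((1 - s) *\<^sub>R b + s *\<^sub>R a) = (\<alpha> + \<beta> * s) *\<^sub>R a + (\<beta> * (1 - s)) *\<^sub>R (b :: 'a :: real_vector)"
  by (simp add: algebra_simps)

lemma segment_area0: fixes p q :: "real \<times> real" shows "measure lebesgue (closed_segment p q) = 0"
proof -
  have "closed_segment p q = convex hull {p, q, q}" by (simp add: segment_convex_hull)
  then show ?thesis using tri_area[of p q q] by simp
qed

lemma glue:
  fixes X :: "(real \<times> real) set"
  assumes fin: "finite X" and pX: "p \<in> X" and qX: "q \<in> X"
    and qp: "q - p = \<kappa> *\<^sub>R u"
    and fX: "\<forall>x\<in>X. det2 u (x - p) \<ge> 0" and fa: "det2 u (a - p) \<le> 0"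
    and h1: "\<forall>x\<in>insert a X. det2 vA (x - p) \<ge> 0" and h1q: "det2 vA (q - p) > 0"
    and h2: "\<forall>x\<in>insert a X. det2 vB (x - q) \<ge> 0" and h2p: "det2 vB (p - q) > 0"
  shows "measure lebesgue (convex hull (insert a X)) =
         measure lebesgue (convex hull X) + measure lebesgue (convex hull {a, p, q})"
proof -
  define H where "H = convex hull X"
  define T where "T = convex hull {a, p, q}"
  have cH: "convex H" "convex T" by (simp_all add: H_def T_def)
  have seg: "z \<in> closed_segment p q"
    if "det2 u (z - p) = 0" "z \<in> convex hull (insert a X)" for z
    using seg_lemma[OF qp that(1) hull_halfplane[OF h1 that(2)] h1q hull_halfplane[OF h2 that(2)] h2p] .
  have segH: "closed_segment p q \<subseteq> H"
    unfolding H_def using pX qX by (simp add: closed_segment_subset hull_inc)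
  have segT: "closed_segment p q \<subseteq> T"
    unfolding T_def by (simp add: closed_segment_subset hull_inc)
  have aT: "a \<in> T" unfolding T_def by (simp add: hull_inc)
  have HK: "H \<subseteq> convex hull (insert a X)" unfolding H_def by (simp add: hull_mono subset_insertI)
  have TK: "T \<subseteq> convex hull (insert a X)" unfolding T_def using pX qX by (intro hull_mono) auto
  have fH: "det2 u (y - p) \<ge> 0" if "y \<in> H" for y
    using hull_halfplane[OF fX] that H_def by blast
  have fT: "det2 (-u) (y - p) \<ge> 0" if "y \<in> T" for y
  proof -
    have "\<forall>x\<in>{a, p, q}. det2 (-u) (x - p) \<ge> 0" using fa qp by auto
    then show ?thesis using hull_halfplane[of "{a,p,q}" "-u" p y] that T_def by blast
  qed
  have eq: "convex hull (insert a X) = H \<union> T"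
  proof
    show "H \<union> T \<subseteq> convex hull (insert a X)" using HK TK by auto
  next
    show "convex hull (insert a X) \<subseteq> H \<union> T"
    proof
      fix x assume xK: "x \<in> convex hull (insert a X)"
      from pX have "X \<noteq> {}" by auto
      from xK obtain t w b where tw: "t \<ge> 0" "w \<ge> 0" "t + w = 1" and bH: "b \<in> H"
        and x: "x = t *\<^sub>R a + w *\<^sub>R b"
        unfolding convex_hull_insert[OF \<open>X \<noteq> {}\<close>] H_def by blast
      have fb: "det2 u (b - p) \<ge> 0" using fH bH by blast
      show "x \<in> H \<union> T"
      proof (cases "det2 u (a - p) = 0")
        case True
        have "a \<in> convex hull (insert a X)" by (simp add: hull_inc)
        with True have "a \<in> H" using seg segH by blast
        then have "x \<in> H" using x tw bH cH(1) by (simp add: convexD)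
        then show ?thesis by simp
      next
        case False
        with fa have fa': "det2 u (a - p) < 0" by simp
        define s where "s = det2 u (b - p) / (det2 u (b - p) - det2 u (a - p))"
        have s01: "0 \<le> s" "s < 1" using fa' fb unfolding s_def
          by (simp_all add: divide_less_eq)
        define z where "z = (1 - s) *\<^sub>R b + s *\<^sub>R a"
        have "det2 u (z - p) = (1 - s) * det2 u (b - p) + s * det2 u (a - p)"
          unfolding z_def by (rule det2_comb) simp
        also have "\<dots> = 0"
        proof -
          define F where "F = det2 u (b - p)"
          define G where "G = det2 u (a - p)"
          have "F - G > 0" using fa' fb by (simp add: F_def G_def)
          then have "(1 - F / (F - G)) * F + F / (F - G) * G = 0"
            by (simp add: field_simps)
          then show ?thesis unfolding s_def F_def[symmetric] G_def[symmetric] .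
        qed
        finally have fz: "det2 u (z - p) = 0" .
        have "z \<in> convex hull (insert a X)"
          unfolding z_def using s01 HK bH by (intro convexD) (auto simp: hull_inc)
        then have zs: "z \<in> closed_segment p q" using seg fz by blast
        show ?thesis
        proof (cases "t \<le> s")
          case True
          show ?thesis
          proof (cases "s = 0")
            case True
            with \<open>t \<le> s\<close> tw have "x = b" using x by simp
            then show ?thesis using bH by simp
          next
            case False
            with s01 have sp: "s > 0" by simp
            have c1: "(1 - t / s) + (t / s) * (1 - s) = w" and c2: "(t / s) * s = t" using sp tw by (simp_all add: field_simps) (metis distrib_left mult.right_neutral)
            have "(1 - t / s) *\<^sub>R b + (t / s) *\<^sub>R z = ((1 - t / s) + (t / s) * (1 - s)) *\<^sub>R b + ((t / s) * s) *\<^sub>R a"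
              unfolding z_def by (rule comb_lemma)
            hence "x = (1 - t / s) *\<^sub>R b + (t / s) *\<^sub>R z" unfolding c1 c2 x by simp
            moreover have "(1 - t / s) *\<^sub>R b + (t / s) *\<^sub>R z \<in> H"
            proof (rule convexD[OF cH(1)])
              show "b \<in> H" "z \<in> H" using zs segH bH by auto
              show "0 \<le> 1 - t / s" using \<open>t \<le> s\<close> sp by simp
              show "0 \<le> t / s" using sp tw by simp
            qed simp
            ultimately show ?thesis by simp
          qed
        next
          case False
          define \<theta> where "\<theta> = (t - s) / (1 - s)"
          have ns: "1 - s \<noteq> 0" using s01 by simp
          have h: "\<theta> * (1 - s) = t - s" unfolding \<theta>_def using ns by simp
          have c1: "\<theta> + (1 - \<theta>) * s = t" using h by (simp add: algebra_simps; linarith)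
          have c2: "(1 - \<theta>) * (1 - s) = w" using h tw by (simp add: algebra_simps; linarith)
          have "\<theta> *\<^sub>R a + (1 - \<theta>) *\<^sub>R z = (\<theta> + (1 - \<theta>) * s) *\<^sub>R a + ((1 - \<theta>) * (1 - s)) *\<^sub>R b"
            unfolding z_def by (rule comb_lemma2)
          hence "x = \<theta> *\<^sub>R a + (1 - \<theta>) *\<^sub>R z" unfolding c1 c2 x by simp
          moreover have "\<theta> *\<^sub>R a + (1 - \<theta>) *\<^sub>R z \<in> T"
          proof (rule convexD[OF cH(2)])
            show "a \<in> T" "z \<in> T" using zs segT aT by auto
            show "0 \<le> \<theta>" using False s01 unfolding \<theta>_def by simp
            show "0 \<le> 1 - \<theta>" using False s01 tw unfolding \<theta>_def by (simp add: divide_le_eq)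
          qed simp
          ultimately show ?thesis by simp
        qed
      qed
    qed
  qed
  have int: "H \<inter> T \<subseteq> closed_segment p q"
  proof
    fix y assume y: "y \<in> H \<inter> T"
    have "det2 u (y - p) = 0" using fH[of y] fT[of y] y by simp
    moreover have "y \<in> convex hull (insert a X)" using y HK by auto
    ultimately show "y \<in> closed_segment p q" using seg by blast
  qed
  have mH: "H \<in> lmeasurable" unfolding H_def
    using fin by (intro lmeasurable_compact finite_imp_compact_convex_hull)
  have mT: "T \<in> lmeasurable" unfolding T_def
    by (intro lmeasurable_compact finite_imp_compact_convex_hull) auto
  have mS: "closed_segment p q \<in> lmeasurable"
    by (intro lmeasurable_compact) simp
  have "measure lebesgue (H \<inter> T) \<le> measure lebesgue (closed_segment p q)"
    using int mH mT mS by (intro measure_mono_fmeasurable) auto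
  then have i0: "measure lebesgue (H \<inter> T) = 0"
    using segment_area0[of p q] measure_nonneg[of lebesgue "H \<inter> T"] by linarith
  show ?thesis
    unfolding eq using measure_Un3[OF mH mT] i0 H_def T_def by simp
qed
lemma shift_ne:
  fixes i k m :: nat
  assumes "0 < k" "k < m"
  shows "(i + k) mod m \<noteq> i mod m"
proof
  assume "(i + k) mod m = i mod m"
  hence "m dvd (i + k) - i" using mod_eq_dvd_iff_nat[of i "i+k" m] by simp
  hence "m dvd k" by simp
  with assms show False using nat_dvd_not_less by blast
qed

locale setting =
  fixes n :: nat and U P :: "nat \<Rightarrow> real \<times> real" and lam :: "nat \<Rightarrow> real" and c :: real
  assumes n2: "n \<ge> 2"
    and U_per: "\<forall>i. U (i + 2*n) = U i"
    and U_sym: "\<forall>i. U (i + n) = - U i"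
    and U_conv: "strictly_convex_ccw (2*n) U"
    and c_pos: "c > 0"
    and P_per: "\<forall>i. P (i + 2*n) = P i"
    and P_edges: "\<forall>i. P (Suc i) - P i = lam i *\<^sub>R Vhalf U i"
    and lam_nonneg: "\<forall>i. lam i \<ge> 0"
    and P_U: "\<forall>i. P i - P (i + n) = (2 * c) *\<^sub>R U i"
begin

lemma per_mod:
  fixes f :: "nat \<Rightarrow> 'b"
  assumes "\<forall>i. f (i + 2*n) = f i"
  shows "f i = f (i mod (2*n))"
proof (induction i rule: less_induct)
  case (less i)
  show ?case
  proof (cases "i < 2*n")
    case True then show ?thesis by simp
  next
    case False
    then have "i = (i - 2*n) + 2*n" by simp
    then have "f i = f (i - 2*n)" using assms by metis
    also have "\<dots> = f ((i - 2*n) mod (2*n))" using less n2 False by simp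
    also have "(i - 2*n) mod (2*n) = i mod (2*n)" using False by (simp add: le_mod_geq)
    finally show ?thesis .
  qed
qed

lemma U_cong: "i mod (2*n) = j mod (2*n) \<Longrightarrow> U i = U j"
  using per_mod[OF U_per] by metis

definition e where "e i = U (Suc i) - U i"
definition D where "D i = det2 (U i) (U (Suc i))"
definition V where "V i = Vhalf U i"

lemma SC:
  assumes "j mod (2*n) \<noteq> i mod (2*n)" "j mod (2*n) \<noteq> Suc i mod (2*n)"
  shows "det2 (e i) (U j - U i) > 0"
proof -
  define m where "m = 2*n"
  have m: "m \<ge> 4" using n2 by (simp add: m_def)
  define i' where "i' = (if i mod m = 0 then m else i mod m)"
  define j' where "j' = (if j mod m = 0 then m else j mod m)"
  have i'r: "i' \<in> {1..m}" "i' mod m = i mod m" using m by (auto simp: i'_def)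
  have j'r: "j' \<in> {1..m}" "j' mod m = j mod m" using m by (auto simp: j'_def)
  have "Suc i' mod m = Suc i mod m" using i'r(2) by (metis mod_Suc_eq)
  have ne1: "j' \<noteq> i'" using assms(1) i'r j'r by (auto simp: m_def)
  have "(i' mod m + 1) mod m = Suc i mod m" using \<open>Suc i' mod m = Suc i mod m\<close> by (metis Suc_eq_plus1 mod_Suc_eq)
  hence ne2: "j' \<noteq> i' mod m + 1" using assms(2) j'r by (auto simp: m_def)
  have "det2 (U (Suc i') - U i') (U j' - U i') > 0"
    using U_conv i'r(1) j'r(1) ne1 ne2 unfolding strictly_convex_ccw_def m_def by blast
  moreover have "U (Suc i') = U (Suc i)" "U i' = U i" "U j' = U j"
    using i'r j'r \<open>Suc i' mod m = Suc i mod m\<close> by (auto intro: U_cong simp: m_def)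
  ultimately show ?thesis by (simp add: e_def)
qed

lemma SCw: "det2 (e i) (U j - U i) \<ge> 0"
proof (cases "j mod (2*n) = i mod (2*n)")
  case True then show ?thesis using U_cong[OF True] by simp
next
  case F: False
  show ?thesis
  proof (cases "j mod (2*n) = Suc i mod (2*n)")
    case True then show ?thesis using U_cong[OF True] by (simp add: e_def)
  next
    case False then show ?thesis using SC[OF F False] by simp
  qed
qed

lemma Us: "U (i + n) = - U i" using U_sym by blast

lemma e_sym: "e (i + n) = - e i"
  using Us[of i] Us[of "Suc i"] by (simp add: e_def)

lemma shiftn: "0 < k \<Longrightarrow> k < 2*n \<Longrightarrow> (i + k) mod (2*n) \<noteq> i mod (2*n)"
  by (rule shift_ne)

lemma D_pos: "D i > 0"
proof -
  have "det2 (e i) (U (i + n) - U i) > 0"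
    apply (rule SC)
    using shiftn[of n i] shiftn[of "n - 1" "Suc i"] n2 by (auto simp: add.commute)
  then show ?thesis using Us[of i] by (simp add: e_def D_def det2_def algebra_simps)
qed

lemma F2: "det2 (e i) (e (Suc i)) > 0"
proof -
  have "det2 (e i) (U (i + 2) - U i) > 0"
    apply (rule SC)
    using shiftn[of 2 i] shiftn[of 1 "Suc i"] n2 by auto
  moreover have "U (i + 2) - U i = e i + e (Suc i)" by (simp add: e_def)
  ultimately show ?thesis by simp
qed

lemma D_sym: "D (i + n) = D i"
  using Us[of i] Us[of "Suc i"] by (simp add: D_def)

lemma V_e: "V i = (1 / D i) *\<^sub>R e i"
  by (simp add: V_def Vhalf_def D_def e_def)

lemma V_sym: "V (i + n) = - V i"
  using e_sym[of i] D_sym[of i] by (simp add: V_e)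

lemma UV1: "det2 (U i) (V i) = 1"
  using D_pos[of i] by (simp add: V_e e_def D_def det2_diff_right)

lemma UV2: "det2 (U (Suc i)) (V i) = 1"
  using D_pos[of i] by (simp add: V_e e_def D_def det2_diff_right det2_swap[of "U (Suc i)"])

lemma cone_arg:
  assumes "det2 a b > 0" "det2 a y \<ge> 0" "det2 b y \<ge> 0" "det2 w a > 0" "det2 w b \<le> 0"
  shows "det2 w y \<le> 0"
proof -
  have "det2 w y * det2 a b = det2 w b * det2 a y - det2 w a * det2 b y"
    using pluecker[of w a b y] by linarith
  also have "\<dots> \<le> 0"
  proof -
    have "det2 w b * det2 a y \<le> 0" using assms by (simp add: mult_nonpos_nonneg)
    moreover have "det2 w a * det2 b y \<ge> 0" using assms by simp
    ultimately show ?thesis by linarith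
  qed
  finally show ?thesis using assms(1) by (simp add: mult_le_0_iff)
qed

lemma TURN_e: "1 \<le> j \<Longrightarrow> j < n \<Longrightarrow> det2 (e k) (e (k + j)) > 0"
proof (induction j rule: dec_induct)
  case base then show ?case using F2[of k] by simp
next
  case (step j)
  have IH: "det2 (e k) (e (k + j)) > 0" using step by simp
  show ?case
  proof (rule ccontr)
    assume neg: "\<not> det2 (e k) (e (k + Suc j)) > 0"
    define a where "a = e (k + j)"
    define b where "b = e (k + Suc j)"
    define y where "y = U (k + n) - U (k + Suc j)"
    have ab: "det2 a b > 0" using F2[of "k+j"] by (simp add: a_def b_def)
    have "det2 a (U (k + n) - U (k + j)) \<ge> 0" using SCw[of "k+j" "k+n"] by (simp add: a_def)
    moreover have "U (k + n) - U (k + j) = y + a" by (simp add: y_def a_def e_def)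
    ultimately have ay: "det2 a y \<ge> 0" by simp
    have by': "det2 b y \<ge> 0" using SCw[of "k + Suc j" "k+n"] by (simp add: b_def y_def)
    have "det2 (e k) y \<le> 0"
      using cone_arg[OF ab ay by'] IH neg by (simp add: a_def b_def)
    moreover have "det2 (e (k + n)) (U (k + Suc j) - U (k + n)) > 0"
    proof (rule SC)
      have jn: "Suc j < n" using step by simp
      have eq1: "k + Suc j + (n - Suc j) = k + n" using jn by simp
      have "(k + Suc j + (n - Suc j)) mod (2 * n) \<noteq> (k + Suc j) mod (2 * n)"
        by (rule shiftn) (use jn in auto)
      then show "(k + Suc j) mod (2 * n) \<noteq> (k + n) mod (2 * n)"
        unfolding eq1 by metis
      have eq2: "k + Suc j + (n - j) = Suc (k + n)" using jn by simp
      have "(k + Suc j + (n - j)) mod (2 * n) \<noteq> (k + Suc j) mod (2 * n)"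
        by (rule shiftn) (use jn in auto)
      then show "(k + Suc j) mod (2 * n) \<noteq> Suc (k + n) mod (2 * n)"
        unfolding eq2 by metis
    qed
    ultimately show False using e_sym[of k]
      by (simp add: y_def det2_diff_right)
  qed
qed

lemma TURN_V: "0 < j \<Longrightarrow> j < n \<Longrightarrow> det2 (V k) (V (k + j)) > 0"
  using TURN_e[of j k] D_pos[of k] D_pos[of "k+j"] by (simp add: V_e)

lemma P_cong: "i mod (2*n) = j mod (2*n) \<Longrightarrow> P i = P j"
  using per_mod[OF P_per] by metis

lemma P_step: "P (Suc i) - P i = lam i *\<^sub>R V i"
  using P_edges by (simp add: V_def)

lemma P_sum: "i \<le> j \<Longrightarrow> P j - P i = (\<Sum>l=i..<j. lam l *\<^sub>R V l)"
proof (induction j rule: dec_induct)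
  case base then show ?case by simp
next
  case (step j)
  have "P (Suc j) - P i = (P j - P i) + (P (Suc j) - P j)" by simp
  also have "\<dots> = (\<Sum>l=i..<Suc j. lam l *\<^sub>R V l)" using step P_step[of j] by simp
  finally show ?case .
qed

lemma det2_sum_right: "det2 v (sum f S) = (\<Sum>x\<in>S. det2 v (f x))"
  by (induction S rule: infinite_finite_induct) auto

lemma P_2n: "P (k + 2*n) = P k" using P_per by blast

lemma support: "det2 (V k) (P j - P k) \<ge> 0"
proof -
  define r where "r = (j + 2*n*k - k) mod (2*n)"
  have "k \<le> 2*n*k" using n2 by simp
  then have nk: "k \<le> j + 2*n*k" by linarith
  have "(k + r) mod (2*n) = (k + (j + 2*n*k - k)) mod (2*n)" by (simp add: r_def mod_add_right_eq)
  also have "k + (j + 2*n*k - k) = j + 2*n*k" using nk by simp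
  also have "(j + 2*n*k) mod (2*n) = j mod (2*n)" by simp
  finally have "P j = P (k + r)" by (intro P_cong) simp
  have r2: "r < 2*n" using n2 by (simp add: r_def)
  show ?thesis
  proof (cases "r \<le> n")
    case True
    have "det2 (V k) (P (k + r) - P k) = (\<Sum>l=k..<k+r. lam l * det2 (V k) (V l))"
      by (simp add: P_sum det2_sum_right)
    also have "\<dots> \<ge> 0"
    proof (rule sum_nonneg)
      fix l assume l: "l \<in> {k..<k+r}"
      show "lam l * det2 (V k) (V l) \<ge> 0"
      proof (cases "l = k")
        case True then show ?thesis by simp
      next
        case False
        then have "det2 (V k) (V (k + (l - k))) > 0" using l True by (intro TURN_V) auto
        then show ?thesis using l lam_nonneg by simp
      qed
    qed
    finally show ?thesis using \<open>P j = P (k + r)\<close> by simp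
  next
    case False
    have "P (k + r) - P k = - (P (k + 2*n) - P (k + r))" using P_2n[of k] by simp
    also have "P (k + 2*n) - P (k + r) = (\<Sum>l=k+r..<k+2*n. lam l *\<^sub>R V l)"
      using r2 by (simp add: P_sum)
    finally have "det2 (V k) (P (k + r) - P k) = - (\<Sum>l=k+r..<k+2*n. lam l * det2 (V k) (V l))"
      by (simp add: det2_sum_right)
    also have "\<dots> \<ge> 0"
    proof -
      have "(\<Sum>l=k+r..<k+2*n. lam l * det2 (V k) (V l)) \<le> 0"
      proof (rule sum_nonpos)
        fix l assume l: "l \<in> {k+r..<k+2*n}"
        have "l = (k + (l - k - n)) + n" using l False by simp
        then have "V l = - V (k + (l - k - n))" using V_sym by metis
        moreover have "det2 (V k) (V (k + (l - k - n))) > 0" using l False by (intro TURN_V) auto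
        ultimately show "lam l * det2 (V k) (V l) \<le> 0" using lam_nonneg[rule_format, of l]
          by (simp add: mult_nonneg_nonpos)
      qed
      then show ?thesis by simp
    qed
    finally show ?thesis using \<open>P j = P (k + r)\<close> by simp
  qed
qed

lemma P_n: "P (k + n) - P k = (- 2 * c) *\<^sub>R U k"
  using P_U[rule_format, of k] by (simp add: algebra_simps)

lemma sign_pattern:
  assumes "k < l" "l < l'" "l' < k + n" "det2 (U k) (V l) \<le> 0"
  shows "det2 (U k) (V l') < 0"
proof -
  have ab: "det2 (V k) (V l) > 0" using TURN_V[of "l - k" k] assms by simp
  have ac: "det2 (V k) (V l') > 0" using TURN_V[of "l' - k" k] assms by simp
  have bc: "det2 (V l) (V l') > 0" using TURN_V[of "l' - l" l] assms by simp
  have "det2 (U k) (V l') * det2 (V k) (V l) = det2 (U k) (V l) * det2 (V k) (V l') - det2 (U k) (V k) * det2 (V l) (V l')"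
    using pluecker[of "U k" "V k" "V l" "V l'"] by linarith
  also have "\<dots> < 0"
  proof -
    have "det2 (U k) (V l) * det2 (V k) (V l') \<le> 0" using assms(4) ac by (simp add: mult_nonpos_nonneg)
    then show ?thesis using UV1[of k] bc by simp
  qed
  finally show ?thesis using ab by (simp add: mult_less_0_iff)
qed

lemma chord: "k \<le> j \<Longrightarrow> j \<le> k + n \<Longrightarrow> det2 (U k) (P j - P k) \<ge> 0"
proof -
  assume kj: "k \<le> j" "j \<le> k + n"
  define s where "s l = lam l * det2 (U k) (V l)" for l
  have g: "det2 (U k) (P j' - P k) = (\<Sum>l=k..<j'. s l)" if "k \<le> j'" for j'
    using that by (simp add: P_sum det2_sum_right s_def)
  show ?thesis
  proof (cases "\<exists>l0\<in>{k..<j}. det2 (U k) (V l0) \<le> 0")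
    case False
    have "(\<Sum>l=k..<j. s l) \<ge> 0"
    proof (rule sum_nonneg)
      fix l assume "l \<in> {k..<j}"
      then have "det2 (U k) (V l) > 0" using False by (auto simp: not_le)
      then show "s l \<ge> 0" using lam_nonneg[rule_format, of l] by (simp add: s_def)
    qed
    then show ?thesis using g kj by simp
  next
    case True
    then obtain l0 where l0: "l0 \<in> {k..<j}" "det2 (U k) (V l0) \<le> 0" by blast
    have "l0 \<noteq> k" using l0 UV1[of k] by auto
    have tail: "(\<Sum>l=j..<k+n. s l) \<le> 0"
    proof (rule sum_nonpos)
      fix l assume l: "l \<in> {j..<k+n}"
      have "det2 (U k) (V l) < 0" using sign_pattern[of k l0 l] l0 l \<open>l0 \<noteq> k\<close> by auto
      then show "s l \<le> 0" using lam_nonneg[rule_format, of l] by (simp add: s_def mult_nonneg_nonpos)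
    qed
    have "det2 (U k) (P (k + n) - P k) = 0" by (simp add: P_n)
    then have "(\<Sum>l=k..<k+n. s l) = 0" using g[of "k+n"] by simp
    moreover have "(\<Sum>l=k..<k+n. s l) = (\<Sum>l=k..<j. s l) + (\<Sum>l=j..<k+n. s l)"
      using kj by (simp add: sum.atLeastLessThan_concat)
    ultimately show ?thesis using g kj tail by simp
  qed
qed

lemma split_arc:
  assumes "det2 (U k) (P t - P k) \<le> 0"
  shows "measure lebesgue (convex hull (insert (P t) (P ` {k..k+n}))) =
         arc_area n P k + measure lebesgue (convex hull {P t, P k, P (k+n)})"
  unfolding arc_area_def
proof (rule glue[where \<kappa> = "- 2 * c" and u = "U k" and vA = "V k" and vB = "V (k + n)"])
  show "finite (P ` {k..k + n})" by simp
  show "P k \<in> P ` {k..k + n}" "P (k + n) \<in> P ` {k..k + n}" by auto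
  show "P (k + n) - P k = (- 2 * c) *\<^sub>R U k" by (rule P_n)
  show "\<forall>x\<in>P ` {k..k + n}. 0 \<le> det2 (U k) (x - P k)" using chord by auto
  show "det2 (U k) (P t - P k) \<le> 0" by (rule assms)
  show "\<forall>x\<in>insert (P t) (P ` {k..k + n}). 0 \<le> det2 (V k) (x - P k)" using support by auto
  show "0 < det2 (V k) (P (k + n) - P k)"
    using c_pos UV1[of k] by (simp add: P_n det2_swap[of "V k"])
  show "\<forall>x\<in>insert (P t) (P ` {k..k + n}). 0 \<le> det2 (V (k + n)) (x - P (k + n))" using support by auto
  have "P k - P (k + n) = (2 * c) *\<^sub>R U k" using P_U by blast
  then show "0 < det2 (V (k + n)) (P k - P (k + n))"
    using c_pos UV1[of k] by (simp add: V_sym det2_swap[of "V k"])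
qed


lemma step_eq:
  "arc_area n P (Suc i) - c * V_length n lam (Suc i) = arc_area n P i - c * V_length n lam i"
proof -
  have e1: "P (Suc (i + n)) = P i - (2 * c) *\<^sub>R U i + lam (i + n) *\<^sub>R V (i + n)"
    using P_step[of "i + n"] P_U[rule_format, of i] by (simp add: algebra_simps)
  have e2: "P (Suc (i + n)) = P (Suc i) - (2 * c) *\<^sub>R U (Suc i)"
    using P_U[rule_format, of "Suc i"] by (simp add: algebra_simps)
  have e3: "P (Suc i) = P i + lam i *\<^sub>R V i" using P_step[of i] by (simp add: algebra_simps)
  have e4: "P (i + n) = P i - (2 * c) *\<^sub>R U i" using P_U[rule_format, of i] by (simp add: algebra_simps)
  have K1: "P ` {i..Suc (i + n)} = insert (P (Suc (i + n))) (P ` {i..i + n})"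
    by (simp add: atLeastAtMostSuc_conv)
  have K2: "P ` {i..Suc (i + n)} = insert (P i) (P ` {Suc i..Suc i + n})"
  proof -
    have "{i..Suc (i + n)} = insert i {Suc i..Suc i + n}" by auto
    then show ?thesis by simp
  qed
  have s1: "det2 (U i) (P (Suc (i + n)) - P i) \<le> 0"
    using UV1[of i] lam_nonneg[rule_format, of "i+n"] by (simp add: e1 V_sym det2_diff_right)
  have s2: "det2 (U (Suc i)) (P i - P (Suc i)) \<le> 0"
    using UV2[of i] lam_nonneg[rule_format, of "i"] by (simp add: e3 det2_diff_right)
  have A1: "measure lebesgue (convex hull (P ` {i..Suc (i + n)})) =
      arc_area n P i + measure lebesgue (convex hull {P (Suc (i + n)), P i, P (i + n)})"
    unfolding K1 by (rule split_arc[OF s1])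
  have A2: "measure lebesgue (convex hull (P ` {i..Suc (i + n)})) =
      arc_area n P (Suc i) + measure lebesgue (convex hull {P i, P (Suc i), P (Suc i + n)})"
    unfolding K2 by (rule split_arc[OF s2])
  have T1: "measure lebesgue (convex hull {P (Suc (i + n)), P i, P (i + n)}) = c * lam (i + n)"
    unfolding tri_area using UV1[of i] c_pos lam_nonneg[rule_format, of "i+n"]
    by (simp add: e1 e4 V_sym det2_swap[of "V i"] det2_diff_right det2_diff_left algebra_simps)
  have T2: "measure lebesgue (convex hull {P i, P (Suc i), P (Suc i + n)}) = c * lam i"
    unfolding tri_area using UV2[of i] c_pos lam_nonneg[rule_format, of "i"]
    by (simp add: e2 e3 det2_swap[of "V i"] det2_diff_right det2_diff_left algebra_simps)
  have L: "V_length n lam (Suc i) = V_length n lam i + lam (i + n) - lam i"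
  proof -
    have a: "(\<Sum>j=i..i+n. lam j) = lam i + (\<Sum>j=Suc i..i+n. lam j)"
      by (simp add: sum.atLeast_Suc_atMost)
    define m where "m = i + n - 1"
    have m: "i + n = Suc m" using n2 by (simp add: m_def)
    have b: "(\<Sum>j=i..i+n. lam j) = (\<Sum>j=i..i+n-1. lam j) + lam (i + n)"
      unfolding m_def[symmetric] m using m by (simp add: sum.cl_ivl_Suc)
    have "Suc i + n - 1 = i + n" by simp
    then show ?thesis unfolding V_length_def using a b by simp
  qed
  have cL: "c * V_length n lam (Suc i) = c * V_length n lam i + c * lam (i + n) - c * lam i"
    unfolding L by (simp add: algebra_simps)
  show ?thesis using A1 A2 T1 T2 cL by linarith
qed

end
theorem corollary3p5:
  fixes n :: nat and U P :: "nat \<Rightarrow> real \<times> real" and lam :: "nat \<Rightarrow> real" and c :: real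
  assumes n2: "n \<ge> 2"
    and U_per: "\<forall>i. U (i + 2*n) = U i"
    and U_sym: "\<forall>i. U (i + n) = - U i"
    and U_conv: "strictly_convex_ccw (2*n) U"
    and c_pos: "c > 0"
    and P_per: "\<forall>i. P (i + 2*n) = P i"
    and lam_per: "\<forall>i. lam (i + 2*n) = lam i"
    and P_conv: "convex_ccw (2*n) P"
    and P_int: "interior (convex hull (P ` {1..2*n})) \<noteq> {}"
    and P_edges: "\<forall>i. P (Suc i) - P i = lam i *\<^sub>R Vhalf U i"
    and lam_nonneg: "\<forall>i. lam i \<ge> 0"
    and P_U: "\<forall>i. P i - P (i + n) = (2 * c) *\<^sub>R U i"
  shows "\<forall>i\<in>{1..2*n}. \<forall>j\<in>{1..2*n}.
           arc_area n P i - c * V_length n lam i = arc_area n P j - c * V_length n lam j"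
proof -
  interpret S: setting n U P lam c
    by unfold_locales (use n2 U_per U_sym U_conv c_pos P_per P_edges lam_nonneg P_U in auto)
  have E: "arc_area n P k - c * V_length n lam k = arc_area n P 0 - c * V_length n lam 0" for k
  proof (induction k)
    case 0 then show ?case by simp
  next
    case (Suc k) then show ?case using S.step_eq[of k] by simp
  qed
  show ?thesis using E by metis
qed

end
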